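(* Let $\mathcal{X}$ be any fuzzy random variable with values in $\mathcal{F}_c(\mathbb{R})$. Then $\mathrm{Med}_s(\mathcal{X})=\mathrm{Med}(\mathcal{X};D_{FT})$.
   Context: $\mathcal{F}_c(\mathbb{R})$ is the set of functions $A:\mathbb{R}\to[0,1]$ whose $\alpha$-levels $A_\alpha=\{x:A(x)\ge\alpha\}$ ($\alpha\in(0,1]$) and $A_0=\overline{\{x:A(x)>0\}}$ are non-empty compact intervals. Support function: $s_A(u,\alpha)=\sup\{uv:v\in A_\alpha\}$, $u\in\{-1,1\}$, $\alpha\in[0,1]$. A fuzzy random variable on $(\Omega,\mathcal{A},\mathbb{P})$ is a map $\mathcal{X}:\Omega\to\mathcal{F}_c(\mathbb{R})$ with each $\omega\mapsto\mathcal{X}(\omega)_\alpha$ a random compact set; $s_{\mathcal{X}}(u,\alpha)(\omega)=s_{\mathcal{X}(\omega)}(u,\alpha)$ is then a real random variable. For a real random variable $X$, $\mathrm{Med}(X)$ is the set of all its medians. $\mathrm{Med}_s(\mathcal{X})$ is the set of $A\in\mathcal{F}_c(\mathbb{R})$ with $s_A(u,\alpha)\in\mathrm{Med}(s_{\mathcal{X}}(u,\alpha))$ for all $u\in\{-1,1\}$, $\alpha\in[0,1]$. The fuzzy Tukey depth is $D_{FT}(A;\mathcal{X})=\inf_{u\in\{-1,1\},\alpha\in[0,1]}\min\big(\mathbb{P}[s_{\mathcal{X}}(u,\alpha)\le s_A(u,\alpha)],\ \mathbb{P}[s_{\mathcal{X}}(u,\alpha)\ge s_A(u,\alpha)]\big)$,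 and $\mathrm{Med}(\mathcal{X};D_{FT})=\{A\in\mathcal{F}_c(\mathbb{R}):D_{FT}(A;\mathcal{X})=\max_{U\in\mathcal{F}_c(\mathbb{R})}D_{FT}(U;\mathcal{X})\}$. *)

theory Defs
  imports "HOL-Probability.Probability"
begin

definition alpha_level :: "(real \<Rightarrow> real) \<Rightarrow> real \<Rightarrow> real set" where
  "alpha_level A \<alpha> =
     (if \<alpha> = 0 then closure {x. A x > 0} else {x. A x \<ge> \<alpha>})"

definition Fc :: "(real \<Rightarrow> real) set" where
  "Fc = {A. (\<forall>x. 0 \<le> A x \<and> A x \<le> 1) \<and>
            (\<forall>\<alpha>\<in>{0..1}. \<exists>a b. a \<le> b \<and> alpha_level A \<alpha> = {a..b})}"

definition supp_fun :: "(real \<Rightarrow> real) \<Rightarrow> real \<Rightarrow> real \<Rightarrow> real" where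
  "supp_fun A u \<alpha> = Sup ((\<lambda>v. u * v) ` alpha_level A \<alpha>)"

definition random_compact_set :: "'a measure \<Rightarrow> ('a \<Rightarrow> real set) \<Rightarrow> bool" where
  "random_compact_set M K \<longleftrightarrow>
     (\<forall>\<omega>\<in>space M. compact (K \<omega>) \<and> K \<omega> \<noteq> {}) \<and>
     (\<forall>G. open G \<longrightarrow> {\<omega>\<in>space M. K \<omega> \<inter> G \<noteq> {}} \<in> sets M)"

definition fuzzy_random_variable :: "'a measure \<Rightarrow> ('a \<Rightarrow> real \<Rightarrow> real) \<Rightarrow> bool" where
  "fuzzy_random_variable M X \<longleftrightarrow>
     (\<forall>\<omega>\<in>space M. X \<omega> \<in> Fc) \<and>
     (\<forall>\<alpha>\<in>{0..1}. random_compact_set M (\<lambda>\<omega>. alpha_level (X \<omega>) \<alpha>))"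

definition Med :: "'a measure \<Rightarrow> ('a \<Rightarrow> real) \<Rightarrow> real set" where
  "Med M Y = {m. measure M {\<omega>\<in>space M. Y \<omega> \<le> m} \<ge> 1/2 \<and>
                 measure M {\<omega>\<in>space M. Y \<omega> \<ge> m} \<ge> 1/2}"

definition Med_s :: "'a measure \<Rightarrow> ('a \<Rightarrow> real \<Rightarrow> real) \<Rightarrow> (real \<Rightarrow> real) set" where
  "Med_s M X = {A\<in>Fc. \<forall>u\<in>{-1,1}. \<forall>\<alpha>\<in>{0..1}.
                   supp_fun A u \<alpha> \<in> Med M (\<lambda>\<omega>. supp_fun (X \<omega>) u \<alpha>)}"

definition D_FT :: "'a measure \<Rightarrow> ('a \<Rightarrow> real \<Rightarrow> real) \<Rightarrow> (real \<Rightarrow> real) \<Rightarrow> real" where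
  "D_FT M X A = (INF p\<in>{-1,1::real} \<times> {0..1::real}.
      min (measure M {\<omega>\<in>space M. supp_fun (X \<omega>) (fst p) (snd p) \<le> supp_fun A (fst p) (snd p)})
          (measure M {\<omega>\<in>space M. supp_fun (X \<omega>) (fst p) (snd p) \<ge> supp_fun A (fst p) (snd p)}))"

definition Med_DFT :: "'a measure \<Rightarrow> ('a \<Rightarrow> real \<Rightarrow> real) \<Rightarrow> (real \<Rightarrow> real) set" where
  "Med_DFT M X = {A\<in>Fc. \<forall>U\<in>Fc. D_FT M X U \<le> D_FT M X A}"

end

theory Submission
  imports Defs
begin
definition lowmed :: "'a measure \<Rightarrow> ('a \<Rightarrow> real) \<Rightarrow> real" where
  "lowmed M Y = Inf {m. measure M {\<omega>\<in>space M. Y \<omega> \<le> m} \<ge> 1/2}"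

context prob_space begin

lemma dec_ge:
  assumes "\<And>n. A n \<in> events" "decseq A" "\<And>n. prob (A n) \<ge> c"
  shows "prob (\<Inter>n. A n) \<ge> c"
proof -
  have "(\<lambda>n. prob (A n)) \<longlonglongrightarrow> prob (\<Inter>n. A n)"
    using assms by (intro finite_Lim_measure_decseq) auto
  then show ?thesis using assms(3) by (intro LIMSEQ_le_const) auto
qed

lemma inc_gt:
  assumes "\<And>n. A n \<in> events" "incseq A" "prob (\<Union>n. A n) > c"
  shows "\<exists>n. prob (A n) > c"
proof -
  have "(\<lambda>n. prob (A n)) \<longlonglongrightarrow> prob (\<Union>n. A n)"
    using assms by (intro finite_Lim_measure_incseq) auto
  from order_tendstoD(1)[OF this assms(3)] show ?thesis
    by (auto dest: eventually_happens)
qed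

lemma disj_le:
  assumes "A \<in> events" "B \<in> events" "A \<inter> B = {}"
  shows "prob A + prob B \<le> 1"
  using assms finite_measure_Union[of A B] prob_le_1[of "A \<union> B"] by auto

lemma disj_eq:
  assumes "A \<in> events" "B \<in> events" "A \<inter> B = {}" "A \<union> B = space M"
  shows "prob A + prob B = 1"
  using assms finite_measure_Union[of A B] prob_space by auto

context
  fixes Y :: "'a \<Rightarrow> real"
  assumes Ym: "Y \<in> borel_measurable M"
begin

lemma ev_le[measurable]: "{\<omega>\<in>space M. Y \<omega> \<le> c} \<in> events"
  using Ym by measurable
lemma ev_ge[measurable]: "{\<omega>\<in>space M. Y \<omega> \<ge> c} \<in> events"
  using Ym by measurable
lemma ev_less[measurable]: "{\<omega>\<in>space M. Y \<omega> < c} \<in> events"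
  using Ym by measurable
lemma ev_gr[measurable]: "{\<omega>\<in>space M. Y \<omega> > c} \<in> events"
  using Ym by measurable

definition "SS = {m. prob {\<omega>\<in>space M. Y \<omega> \<le> m} \<ge> 1/2}"

lemma SS_ne: "SS \<noteq> {}"
proof -
  define A where "A n = {\<omega>\<in>space M. Y \<omega> \<le> real n}" for n :: nat
  have "incseq A" unfolding A_def incseq_def by auto
  moreover have "(\<Union>n. A n) = space M" unfolding A_def
    by (auto intro: real_nat_ceiling_ge)
  ultimately obtain n where "prob (A n) > 1/2"
    using inc_gt[of A "1/2"] ev_le prob_space unfolding A_def by auto
  then have "real n \<in> SS" unfolding SS_def A_def by auto
  then show ?thesis by auto
qed

lemma SS_bdd: "bdd_below SS"
proof -
  define A where "A n = {\<omega>\<in>space M. Y \<omega> > - real n}" for n :: nat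
  have "incseq A" unfolding A_def incseq_def by auto
  moreover have "(\<Union>n. A n) = space M" unfolding A_def
  proof (auto)
    fix x assume "x \<in> space M"
    obtain n where "real n > - Y x" using reals_Archimedean2 by blast
    then show "\<exists>n. - real n < Y x" by (intro exI[of _ n]) auto
  qed
  ultimately obtain n where n: "prob (A n) > 1/2"
    using inc_gt[of A "1/2"] ev_gr prob_space unfolding A_def by auto
  have "- real n \<le> m" if "m \<in> SS" for m
  proof (rule ccontr)
    assume "\<not> - real n \<le> m"
    then have "{\<omega>\<in>space M. Y \<omega> \<le> m} \<inter> A n = {}" unfolding A_def by auto
    from disj_le[OF ev_le _ this] n that show False unfolding SS_def A_def by auto
  qed
  then show ?thesis unfolding bdd_below_def by blast
qed

lemma lowmed_eq: "lowmed M Y = Inf SS" unfolding lowmed_def SS_def by simp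

lemma lowmed_le: "prob {\<omega>\<in>space M. Y \<omega> \<le> m} \<ge> 1/2 \<Longrightarrow> lowmed M Y \<le> m"
  unfolding lowmed_eq by (rule cInf_lower[OF _ SS_bdd]) (auto simp: SS_def)

lemma lowmed_ge: "(\<And>m. prob {\<omega>\<in>space M. Y \<omega> \<le> m} \<ge> 1/2 \<Longrightarrow> c \<le> m) \<Longrightarrow> c \<le> lowmed M Y"
  unfolding lowmed_eq by (rule cInf_greatest[OF SS_ne]) (auto simp: SS_def)

lemma lowmed_half1: "prob {\<omega>\<in>space M. Y \<omega> \<le> lowmed M Y} \<ge> 1/2"
proof -
  define l where "l = lowmed M Y"
  define A where "A n = {\<omega>\<in>space M. Y \<omega> \<le> l + 1 / (real n + 1)}" for n :: nat
  have "decseq A" unfolding A_def decseq_def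
    by (auto simp: frac_le intro: order_trans)
  moreover have "(\<Inter>n. A n) = {\<omega>\<in>space M. Y \<omega> \<le> l}"
  proof (auto simp: A_def)
    fix x assume x: "\<forall>n. Y x \<le> l + 1 / (real n + 1)"
    show "Y x \<le> l"
    proof (rule ccontr)
      assume "\<not> Y x \<le> l"
      then obtain n where "1 / (real n + 1) < Y x - l"
        using reals_Archimedean[of "Y x - l"] by (auto simp: inverse_eq_divide add.commute)
      with x show False by (smt (verit))
    qed
  next
    fix x n assume "Y x \<le> l" then show "Y x \<le> l + 1 / (real n + 1)"
      by (smt (verit) divide_nonneg_nonneg of_nat_0_le_iff)
  qed
  moreover have "prob (A n) \<ge> 1/2" for n
  proof -
    have "Inf SS < l + 1 / (real n + 1)" unfolding l_def lowmed_eq by simp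
    then obtain s where s: "s \<in> SS" "s < l + 1 / (real n + 1)"
      using cInf_less_iff[OF SS_ne SS_bdd] by auto
    have "prob {\<omega>\<in>space M. Y \<omega> \<le> s} \<le> prob (A n)"
      unfolding A_def using s(2) by (intro finite_measure_mono) auto
    with s(1) show ?thesis unfolding SS_def by auto
  qed
  ultimately show ?thesis using dec_ge[of A "1/2"] unfolding l_def A_def by auto
qed

lemma lowmed_half2: "prob {\<omega>\<in>space M. Y \<omega> \<ge> lowmed M Y} \<ge> 1/2"
proof -
  define l where "l = lowmed M Y"
  define A where "A n = {\<omega>\<in>space M. Y \<omega> > l - 1 / (real n + 1)}" for n :: nat
  have "decseq A" unfolding A_def decseq_def
    by (auto simp: frac_le intro: order_trans) (smt (verit) frac_le of_nat_0_le_iff of_nat_mono)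
  moreover have "(\<Inter>n. A n) = {\<omega>\<in>space M. Y \<omega> \<ge> l}"
  proof (auto simp: A_def)
    fix x assume x: "\<forall>n. Y x > l - 1 / (real n + 1)"
    show "Y x \<ge> l"
    proof (rule ccontr)
      assume "\<not> Y x \<ge> l"
      then obtain n where "1 / (real n + 1) < l - Y x"
        using reals_Archimedean[of "l - Y x"] by (auto simp: inverse_eq_divide add.commute)
      with x show False by (smt (verit))
    qed
  next
    fix x n assume "Y x \<ge> l" then show "Y x > l - 1 / (real n + 1)"
      by (smt (verit) divide_pos_pos of_nat_0_le_iff)
  qed
  moreover have "prob (A n) \<ge> 1/2" for n
  proof -
    have "prob {\<omega>\<in>space M. Y \<omega> \<le> l - 1 / (real n + 1)} < 1/2"
    proof (rule ccontr)
      assume "\<not> ?thesis"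
      then have "l \<le> l - 1 / (real n + 1)" unfolding l_def by (intro lowmed_le) auto
      then show False by (smt (verit) divide_pos_pos of_nat_0_le_iff)
    qed
    moreover have "prob {\<omega>\<in>space M. Y \<omega> \<le> l - 1 / (real n + 1)} + prob (A n) = 1"
      unfolding A_def by (intro disj_eq ev_le ev_gr) auto
    ultimately show ?thesis by auto
  qed
  ultimately show ?thesis using dec_ge[of A "1/2"] unfolding l_def A_def by auto
qed

lemma lowmed_Med: "lowmed M Y \<in> Med M Y"
  unfolding Med_def using lowmed_half1 lowmed_half2 by auto

end

lemma lowmed_mono:
  assumes "Y \<in> borel_measurable M" "Z \<in> borel_measurable M" "\<And>\<omega>. \<omega> \<in> space M \<Longrightarrow> Y \<omega> \<le> Z \<omega>"
  shows "lowmed M Y \<le> lowmed M Z"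
proof (rule lowmed_ge[OF assms(2)])
  fix m assume m: "1/2 \<le> prob {\<omega>\<in>space M. Z \<omega> \<le> m}"
  have "prob {\<omega>\<in>space M. Z \<omega> \<le> m} \<le> prob {\<omega>\<in>space M. Y \<omega> \<le> m}"
    using assms by (intro finite_measure_mono ev_le[OF assms(1)]) (auto intro: order_trans)
  with m show "lowmed M Y \<le> m" by (intro lowmed_le[OF assms(1)]) auto
qed

end

definition lft :: "(real \<Rightarrow> real) \<Rightarrow> real \<Rightarrow> real" where
  "lft A \<alpha> = Inf (alpha_level A \<alpha>)"
definition rgt :: "(real \<Rightarrow> real) \<Rightarrow> real \<Rightarrow> real" where
  "rgt A \<alpha> = Sup (alpha_level A \<alpha>)"

lemma Fc_level:
  assumes "A \<in> Fc" "\<alpha> \<in> {0..1}"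
  shows "alpha_level A \<alpha> = {lft A \<alpha> .. rgt A \<alpha>} \<and> lft A \<alpha> \<le> rgt A \<alpha>"
proof -
  obtain a b where "a \<le> b" "alpha_level A \<alpha> = {a..b}" using assms unfolding Fc_def by blast
  then show ?thesis unfolding lft_def rgt_def by auto
qed

lemma supp_pos: "supp_fun A 1 \<alpha> = rgt A \<alpha>"
  unfolding supp_fun_def rgt_def by simp

lemma supp_neg: "supp_fun A (-1) \<alpha> = - lft A \<alpha>"
  unfolding supp_fun_def lft_def Inf_real_def by simp

lemma Fc_vals: "A \<in> Fc \<Longrightarrow> 0 \<le> A x \<and> A x \<le> 1"
  unfolding Fc_def by auto

lemma level_mono:
  assumes "A \<in> Fc" "0 \<le> \<alpha>" "\<alpha> \<le> \<beta>" "\<beta> \<le> 1"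
  shows "alpha_level A \<beta> \<subseteq> alpha_level A \<alpha>"
proof (cases "\<alpha> = 0")
  case True
  show ?thesis
  proof (cases "\<beta> = 0")
    case False
    then have "alpha_level A \<beta> \<subseteq> {x. A x > 0}" unfolding alpha_level_def
      using assms True by auto
    also have "\<dots> \<subseteq> closure {x. A x > 0}" by (rule closure_subset)
    finally show ?thesis using True unfolding alpha_level_def by simp
  qed (use True in simp)
next
  case False
  then show ?thesis using assms unfolding alpha_level_def by auto
qed

lemma lft_mono:
  assumes "A \<in> Fc" "0 \<le> \<alpha>" "\<alpha> \<le> \<beta>" "\<beta> \<le> 1"
  shows "lft A \<alpha> \<le> lft A \<beta> \<and> rgt A \<beta> \<le> rgt A \<alpha>"
proof -
  have "{lft A \<beta> .. rgt A \<beta>} \<subseteq> {lft A \<alpha> .. rgt A \<alpha>}" "lft A \<beta> \<le> rgt A \<beta>"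
    using level_mono[OF assms] Fc_level[OF assms(1), of \<alpha>] Fc_level[OF assms(1), of \<beta>] assms
    by auto
  then show ?thesis by auto
qed

lemma lft_le_rgt: "A \<in> Fc \<Longrightarrow> \<alpha> \<in> {0..1} \<Longrightarrow> lft A \<alpha> \<le> rgt A \<alpha>"
  using Fc_level by blast

lemma level_pos: "\<alpha> \<noteq> 0 \<Longrightarrow> alpha_level A \<alpha> = {x. A x \<ge> \<alpha>}"
  unfolding alpha_level_def by simp

lemma lft_leftcont:
  assumes A: "A \<in> Fc" and a: "0 < \<alpha>" "\<alpha> \<le> 1"
    and h: "\<And>\<beta>. 0 < \<beta> \<Longrightarrow> \<beta> < \<alpha> \<Longrightarrow> lft A \<beta> \<le> c"
  shows "lft A \<alpha> \<le> c"
proof (cases "\<exists>\<beta>. 0 < \<beta> \<and> \<beta> < \<alpha> \<and> rgt A \<beta> < c")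
  case True
  then obtain \<beta> where b: "0 < \<beta>" "\<beta> < \<alpha>" "rgt A \<beta> < c" by auto
  have "lft A \<alpha> \<le> rgt A \<alpha>" using lft_le_rgt[OF A] a by auto
  moreover have "rgt A \<alpha> \<le> rgt A \<beta>" using lft_mono[OF A, of \<beta> \<alpha>] a b by auto
  ultimately show ?thesis using b by auto
next
  case False
  have "\<beta> \<le> A c" if "0 < \<beta>" "\<beta> < \<alpha>" for \<beta>
  proof -
    have "c \<in> alpha_level A \<beta>" using Fc_level[OF A, of \<beta>] h[OF that] False that a by auto
    then show ?thesis using level_pos[of \<beta> A] that by auto
  qed
  then have "\<alpha> \<le> A c" by (intro dense_le_bounded[OF a(1)]) auto
  then have "c \<in> alpha_level A \<alpha>" using level_pos[of \<alpha> A] a by auto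
  then show ?thesis using Fc_level[OF A, of \<alpha>] a by auto
qed

lemma rgt_leftcont:
  assumes A: "A \<in> Fc" and a: "0 < \<alpha>" "\<alpha> \<le> 1"
    and h: "\<And>\<beta>. 0 < \<beta> \<Longrightarrow> \<beta> < \<alpha> \<Longrightarrow> c \<le> rgt A \<beta>"
  shows "c \<le> rgt A \<alpha>"
proof (cases "\<exists>\<beta>. 0 < \<beta> \<and> \<beta> < \<alpha> \<and> c < lft A \<beta>")
  case True
  then obtain \<beta> where b: "0 < \<beta>" "\<beta> < \<alpha>" "c < lft A \<beta>" by auto
  have "lft A \<alpha> \<le> rgt A \<alpha>" using lft_le_rgt[OF A] a by auto
  moreover have "lft A \<beta> \<le> lft A \<alpha>" using lft_mono[OF A, of \<beta> \<alpha>] a b by auto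
  ultimately show ?thesis using b by auto
next
  case False
  have "\<beta> \<le> A c" if "0 < \<beta>" "\<beta> < \<alpha>" for \<beta>
  proof -
    have "c \<in> alpha_level A \<beta>" using Fc_level[OF A, of \<beta>] h[OF that] False that a by auto
    then show ?thesis using level_pos[of \<beta> A] that by auto
  qed
  then have "\<alpha> \<le> A c" by (intro dense_le_bounded[OF a(1)]) auto
  then have "c \<in> alpha_level A \<alpha>" using level_pos[of \<alpha> A] a by auto
  then show ?thesis using Fc_level[OF A, of \<alpha>] a by auto
qed

lemma lft_at0:
  assumes A: "A \<in> Fc" and h: "\<And>\<beta>. 0 < \<beta> \<Longrightarrow> \<beta> \<le> 1 \<Longrightarrow> c \<le> lft A \<beta>"
  shows "c \<le> lft A 0"
proof -
  have "{x. A x > 0} \<subseteq> {c..}"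
  proof
    fix x assume x: "x \<in> {x. A x > 0}"
    then have "x \<in> alpha_level A (A x)" using level_pos[of "A x" A] by auto
    then have "lft A (A x) \<le> x" using Fc_level[OF A, of "A x"] Fc_vals[OF A, of x] x by auto
    then show "x \<in> {c..}" using h[of "A x"] Fc_vals[OF A, of x] x by auto
  qed
  then have "closure {x. A x > 0} \<subseteq> {c..}" by (intro closure_minimal) auto
  then have "alpha_level A 0 \<subseteq> {c..}" unfolding alpha_level_def by simp
  then show ?thesis using Fc_level[OF A, of 0] by auto
qed

lemma rgt_at0:
  assumes A: "A \<in> Fc" and h: "\<And>\<beta>. 0 < \<beta> \<Longrightarrow> \<beta> \<le> 1 \<Longrightarrow> rgt A \<beta> \<le> c"
  shows "rgt A 0 \<le> c"
proof -
  have "{x. A x > 0} \<subseteq> {..c}"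
  proof
    fix x assume x: "x \<in> {x. A x > 0}"
    then have "x \<in> alpha_level A (A x)" using level_pos[of "A x" A] by auto
    then have "x \<le> rgt A (A x)" using Fc_level[OF A, of "A x"] Fc_vals[OF A, of x] x by auto
    then show "x \<in> {..c}" using h[of "A x"] Fc_vals[OF A, of x] x by auto
  qed
  then have "closure {x. A x > 0} \<subseteq> {..c}" by (intro closure_minimal) auto
  then have "alpha_level A 0 \<subseteq> {..c}" unfolding alpha_level_def by simp
  then show ?thesis using Fc_level[OF A, of 0] by auto
qed

lemma lft_meas:
  assumes X: "fuzzy_random_variable M X" and a: "\<alpha> \<in> {0..1}"
  shows "(\<lambda>\<omega>. lft (X \<omega>) \<alpha>) \<in> borel_measurable M"
  unfolding borel_measurable_iff_less
proof
  fix c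
  have "{w \<in> space M. lft (X w) \<alpha> < c} = {w \<in> space M. alpha_level (X w) \<alpha> \<inter> {..<c} \<noteq> {}}"
    using Fc_level[OF _ a] X unfolding fuzzy_random_variable_def
    by (auto; fastforce)
  also have "\<dots> \<in> sets M" using X a unfolding fuzzy_random_variable_def random_compact_set_def
    by auto
  finally show "{w \<in> space M. lft (X w) \<alpha> < c} \<in> sets M" .
qed

lemma rgt_meas:
  assumes X: "fuzzy_random_variable M X" and a: "\<alpha> \<in> {0..1}"
  shows "(\<lambda>\<omega>. rgt (X \<omega>) \<alpha>) \<in> borel_measurable M"
  unfolding borel_measurable_iff_greater
proof
  fix c
  have "{w \<in> space M. c < rgt (X w) \<alpha>} = {w \<in> space M. alpha_level (X w) \<alpha> \<inter> {c<..} \<noteq> {}}"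
    using Fc_level[OF _ a] X unfolding fuzzy_random_variable_def
    by (auto; fastforce)
  also have "\<dots> \<in> sets M" using X a unfolding fuzzy_random_variable_def random_compact_set_def
    by auto
  finally show "{w \<in> space M. c < rgt (X w) \<alpha>} \<in> sets M" .
qed


lemma Med_neg: "m \<in> Med M Y \<longleftrightarrow> -m \<in> Med M (\<lambda>\<omega>. - Y \<omega>)"
  unfolding Med_def by (auto simp: conj_commute)

lemma Med_cong: "(\<And>\<omega>. \<omega> \<in> space M \<Longrightarrow> Y \<omega> = Z \<omega>) \<Longrightarrow> Med M Y = Med M Z"
  unfolding Med_def by (intro Collect_cong) (metis (mono_tags, lifting) Collect_cong)

context prob_space begin

lemma lowmed_leftcont:
  fixes Y :: "real \<Rightarrow> 'a \<Rightarrow> real"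
  assumes meas: "\<And>\<beta>. 0 < \<beta> \<Longrightarrow> \<beta> \<le> \<alpha> \<Longrightarrow> Y \<beta> \<in> borel_measurable M"
    and mono: "\<And>\<beta> \<gamma> \<omega>. 0 < \<beta> \<Longrightarrow> \<beta> \<le> \<gamma> \<Longrightarrow> \<gamma> \<le> \<alpha> \<Longrightarrow> \<omega> \<in> space M \<Longrightarrow> Y \<beta> \<omega> \<le> Y \<gamma> \<omega>"
    and pw: "\<And>\<omega> c. \<omega> \<in> space M \<Longrightarrow> (\<And>\<beta>. 0 < \<beta> \<Longrightarrow> \<beta> < \<alpha> \<Longrightarrow> Y \<beta> \<omega> \<le> c) \<Longrightarrow> Y \<alpha> \<omega> \<le> c"
    and a: "0 < \<alpha>"
    and h: "\<And>\<beta>. 0 < \<beta> \<Longrightarrow> \<beta> < \<alpha> \<Longrightarrow> lowmed M (Y \<beta>) \<le> c"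
  shows "lowmed M (Y \<alpha>) \<le> c"
proof -
  define b where "b n = \<alpha> - \<alpha> / (real n + 2)" for n :: nat
  have b0: "0 < b n" "b n < \<alpha>" for n
    using a unfolding b_def by (auto simp: field_simps intro: add_pos_nonneg)
  have bmono: "b n \<le> b m" if "n \<le> m" for n m
    using a that unfolding b_def by (auto intro!: divide_left_mono)
  define E where "E n = {\<omega>\<in>space M. Y (b n) \<omega> \<le> c}" for n
  have Ee: "E n \<in> events" for n unfolding E_def using meas[of "b n"] b0[of n] ev_le by auto
  have "decseq E" unfolding decseq_def E_def
  proof (safe)
    fix m n x assume "m \<le> n" "x \<in> space M" "Y (b n) x \<le> c"
    then show "Y (b m) x \<le> c" using mono[of "b m" "b n" x] b0[of m] b0[of n] bmono[of m n]
      by auto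
  qed
  moreover have "prob (E n) \<ge> 1/2" for n
  proof -
    have "prob {\<omega>\<in>space M. Y (b n) \<omega> \<le> lowmed M (Y (b n))} \<le> prob (E n)"
      unfolding E_def using h[OF b0[of n]] Ee[of n] unfolding E_def
      by (intro finite_measure_mono) auto
    with lowmed_half1[OF meas[of "b n"]] b0[of n] show ?thesis by auto
  qed
  ultimately have "prob (\<Inter>n. E n) \<ge> 1/2" using dec_ge Ee by blast
  moreover have "(\<Inter>n. E n) \<subseteq> {\<omega>\<in>space M. Y \<alpha> \<omega> \<le> c}"
  proof
    fix \<omega> assume w: "\<omega> \<in> (\<Inter>n. E n)"
    then have sp: "\<omega> \<in> space M" unfolding E_def by auto
    have "Y \<alpha> \<omega> \<le> c"
    proof (rule pw[OF sp])
      fix \<beta> assume bb: "0 < \<beta>" "\<beta> < \<alpha>"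
      obtain n where n: "\<alpha> / (\<alpha> - \<beta>) < real n" using reals_Archimedean2 by blast
      have "\<alpha> / (real n + 2) \<le> \<alpha> - \<beta>"
        using n bb a by (simp add: field_simps)
      then have "\<beta> \<le> b n" unfolding b_def by simp
      then have "Y \<beta> \<omega> \<le> Y (b n) \<omega>" using mono[OF bb(1) _ _ sp] b0[of n] by auto
      also have "\<dots> \<le> c" using w unfolding E_def by auto
      finally show "Y \<beta> \<omega> \<le> c" .
    qed
    then show "\<omega> \<in> {\<omega>\<in>space M. Y \<alpha> \<omega> \<le> c}" using sp by auto
  qed
  then have "prob (\<Inter>n. E n) \<le> prob {\<omega>\<in>space M. Y \<alpha> \<omega> \<le> c}"
    using meas[of \<alpha>] a by (intro finite_measure_mono ev_le) auto
  ultimately show ?thesis using lowmed_le[OF meas[of \<alpha>]] a by auto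
qed

lemma lowmed_at0:
  fixes Y :: "real \<Rightarrow> 'a \<Rightarrow> real"
  assumes meas: "\<And>\<beta>. 0 \<le> \<beta> \<Longrightarrow> \<beta> \<le> 1 \<Longrightarrow> Y \<beta> \<in> borel_measurable M"
    and mono: "\<And>\<beta> \<gamma> \<omega>. 0 \<le> \<beta> \<Longrightarrow> \<beta> \<le> \<gamma> \<Longrightarrow> \<gamma> \<le> 1 \<Longrightarrow> \<omega> \<in> space M \<Longrightarrow> Y \<beta> \<omega> \<le> Y \<gamma> \<omega>"
    and pw: "\<And>\<omega> c. \<omega> \<in> space M \<Longrightarrow> (\<And>\<beta>. 0 < \<beta> \<Longrightarrow> \<beta> \<le> 1 \<Longrightarrow> c \<le> Y \<beta> \<omega>) \<Longrightarrow> c \<le> Y 0 \<omega>"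
  shows "Inf ((\<lambda>\<beta>. lowmed M (Y \<beta>)) ` {0<..1}) \<in> Med M (Y 0)"
proof -
  define L where "L = Inf ((\<lambda>\<beta>. lowmed M (Y \<beta>)) ` {0<..1})"
  have m0: "Y 0 \<in> borel_measurable M" using meas by auto
  have lm: "lowmed M (Y 0) \<le> lowmed M (Y \<beta>)" if "0 < \<beta>" "\<beta> \<le> 1" for \<beta>
    using that by (intro lowmed_mono meas mono) auto
  have bdd: "bdd_below ((\<lambda>\<beta>. lowmed M (Y \<beta>)) ` {0<..1})"
    unfolding bdd_below_def using lm by (intro exI[of _ "lowmed M (Y 0)"]) auto
  have L1: "lowmed M (Y 0) \<le> L" unfolding L_def
    by (rule cInf_greatest) (use lm in auto)
  have L2: "L \<le> lowmed M (Y \<beta>)" if "0 < \<beta>" "\<beta> \<le> 1" for \<beta>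
    unfolding L_def using that by (intro cInf_lower[OF _ bdd]) auto
  have P1: "prob {\<omega>\<in>space M. Y 0 \<omega> \<le> L} \<ge> 1/2"
  proof -
    have "prob {\<omega>\<in>space M. Y 0 \<omega> \<le> lowmed M (Y 0)} \<le> prob {\<omega>\<in>space M. Y 0 \<omega> \<le> L}"
      using L1 by (intro finite_measure_mono ev_le[OF m0]) auto
    with lowmed_half1[OF m0] show ?thesis by auto
  qed
  define b where "b n = 1 / (real n + 1)" for n :: nat
  have b0: "0 < b n" "b n \<le> 1" for n unfolding b_def by auto
  have bmono: "b m \<le> b n" if "n \<le> m" for n m
    using that unfolding b_def by (auto simp: frac_le)
  define E where "E n = {\<omega>\<in>space M. Y (b n) \<omega> \<ge> L}" for n
  have Ee: "E n \<in> events" for n unfolding E_def using meas[of "b n"] b0[of n] ev_ge by auto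
  have "decseq E" unfolding decseq_def E_def
  proof (safe)
    fix m n x assume "m \<le> n" "x \<in> space M" "L \<le> Y (b n) x"
    then show "L \<le> Y (b m) x" using mono[of "b n" "b m" x] b0[of m] b0[of n] bmono[of m n]
      by auto
  qed
  moreover have "prob (E n) \<ge> 1/2" for n
  proof -
    have "prob {\<omega>\<in>space M. Y (b n) \<omega> \<ge> lowmed M (Y (b n))} \<le> prob (E n)"
      unfolding E_def using L2[OF b0[of n]] Ee[of n] unfolding E_def
      by (intro finite_measure_mono) auto
    with lowmed_half2[OF meas[of "b n"]] b0[of n] show ?thesis by auto
  qed
  ultimately have "prob (\<Inter>n. E n) \<ge> 1/2" using dec_ge Ee by blast
  moreover have "(\<Inter>n. E n) \<subseteq> {\<omega>\<in>space M. Y 0 \<omega> \<ge> L}"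
  proof
    fix \<omega> assume w: "\<omega> \<in> (\<Inter>n. E n)"
    then have sp: "\<omega> \<in> space M" unfolding E_def by auto
    have "L \<le> Y 0 \<omega>"
    proof (rule pw[OF sp])
      fix \<beta> :: real assume bb: "0 < \<beta>" "\<beta> \<le> 1"
      obtain n where n: "1 / \<beta> < real n" using reals_Archimedean2 by blast
      have "b n \<le> \<beta>"
        using n bb unfolding b_def by (simp add: field_simps)
      then have "Y (b n) \<omega> \<le> Y \<beta> \<omega>" using mono[OF _ _ bb(2) sp] b0[of n] by auto
      moreover have "L \<le> Y (b n) \<omega>" using w unfolding E_def by auto
      ultimately show "L \<le> Y \<beta> \<omega>" by auto
    qed
    then show "\<omega> \<in> {\<omega>\<in>space M. Y 0 \<omega> \<ge> L}" using sp by auto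
  qed
  then have "prob (\<Inter>n. E n) \<le> prob {\<omega>\<in>space M. Y 0 \<omega> \<ge> L}"
    by (intro finite_measure_mono ev_ge[OF m0])
  ultimately show ?thesis using P1 unfolding Med_def L_def by auto
qed

end

definition mL :: "'a measure \<Rightarrow> ('a \<Rightarrow> real \<Rightarrow> real) \<Rightarrow> real \<Rightarrow> real" where
  "mL M X \<alpha> = lowmed M (\<lambda>\<omega>. lft (X \<omega>) \<alpha>)"
definition mR :: "'a measure \<Rightarrow> ('a \<Rightarrow> real \<Rightarrow> real) \<Rightarrow> real \<Rightarrow> real" where
  "mR M X \<alpha> = - lowmed M (\<lambda>\<omega>. - rgt (X \<omega>) \<alpha>)"
definition medS :: "'a measure \<Rightarrow> ('a \<Rightarrow> real \<Rightarrow> real) \<Rightarrow> real \<Rightarrow> real set" where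
  "medS M X x = {\<alpha>\<in>{0<..1}. mL M X \<alpha> \<le> x \<and> x \<le> mR M X \<alpha>}"
definition medA :: "'a measure \<Rightarrow> ('a \<Rightarrow> real \<Rightarrow> real) \<Rightarrow> real \<Rightarrow> real" where
  "medA M X x = (if medS M X x = {} then 0 else Sup (medS M X x))"

context prob_space begin

context
  fixes X :: "'a \<Rightarrow> real \<Rightarrow> real"
  assumes X: "fuzzy_random_variable M X"
begin

lemma XF: "\<omega> \<in> space M \<Longrightarrow> X \<omega> \<in> Fc"
  using X unfolding fuzzy_random_variable_def by auto

lemma mlm: "0 \<le> \<alpha> \<Longrightarrow> \<alpha> \<le> 1 \<Longrightarrow> (\<lambda>\<omega>. lft (X \<omega>) \<alpha>) \<in> borel_measurable M"
  using lft_meas[OF X] by auto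
lemma mrm: "0 \<le> \<alpha> \<Longrightarrow> \<alpha> \<le> 1 \<Longrightarrow> (\<lambda>\<omega>. rgt (X \<omega>) \<alpha>) \<in> borel_measurable M"
  using rgt_meas[OF X] by auto
lemma mrm': "0 \<le> \<alpha> \<Longrightarrow> \<alpha> \<le> 1 \<Longrightarrow> (\<lambda>\<omega>. - rgt (X \<omega>) \<alpha>) \<in> borel_measurable M"
  using mrm by (intro borel_measurable_uminus) auto

lemma lmono: "\<omega> \<in> space M \<Longrightarrow> 0 \<le> \<beta> \<Longrightarrow> \<beta> \<le> \<gamma> \<Longrightarrow> \<gamma> \<le> 1 \<Longrightarrow> lft (X \<omega>) \<beta> \<le> lft (X \<omega>) \<gamma>"
  using lft_mono[OF XF] by blast
lemma rmono: "\<omega> \<in> space M \<Longrightarrow> 0 \<le> \<beta> \<Longrightarrow> \<beta> \<le> \<gamma> \<Longrightarrow> \<gamma> \<le> 1 \<Longrightarrow> rgt (X \<omega>) \<gamma> \<le> rgt (X \<omega>) \<beta>"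
  using lft_mono[OF XF] by blast
lemma lrle: "\<omega> \<in> space M \<Longrightarrow> 0 \<le> \<beta> \<Longrightarrow> \<beta> \<le> 1 \<Longrightarrow> lft (X \<omega>) \<beta> \<le> rgt (X \<omega>) \<beta>"
  using lft_le_rgt[OF XF] by auto

lemma mL_mono: "0 \<le> \<alpha> \<Longrightarrow> \<alpha> \<le> \<beta> \<Longrightarrow> \<beta> \<le> 1 \<Longrightarrow> mL M X \<alpha> \<le> mL M X \<beta>"
  unfolding mL_def by (intro lowmed_mono mlm) (auto intro: lmono)

lemma mR_mono: "0 \<le> \<alpha> \<Longrightarrow> \<alpha> \<le> \<beta> \<Longrightarrow> \<beta> \<le> 1 \<Longrightarrow> mR M X \<beta> \<le> mR M X \<alpha>"
  unfolding mR_def by (simp, intro lowmed_mono mrm') (auto intro: rmono)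

lemma mR_Med: "0 \<le> \<alpha> \<Longrightarrow> \<alpha> \<le> 1 \<Longrightarrow> mR M X \<alpha> \<in> Med M (\<lambda>\<omega>. rgt (X \<omega>) \<alpha>)"
proof -
  assume a: "0 \<le> \<alpha>" "\<alpha> \<le> 1"
  have "- mR M X \<alpha> \<in> Med M (\<lambda>\<omega>. - rgt (X \<omega>) \<alpha>)"
    unfolding mR_def using lowmed_Med[OF mrm'[OF a]] by simp
  then show ?thesis using Med_neg[of "mR M X \<alpha>" M] by blast
qed

lemma mL_Med: "0 \<le> \<alpha> \<Longrightarrow> \<alpha> \<le> 1 \<Longrightarrow> mL M X \<alpha> \<in> Med M (\<lambda>\<omega>. lft (X \<omega>) \<alpha>)"
  unfolding mL_def using lowmed_Med[OF mlm] by simp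

lemma mL_le_mR: "0 \<le> \<alpha> \<Longrightarrow> \<alpha> \<le> 1 \<Longrightarrow> mL M X \<alpha> \<le> mR M X \<alpha>"
proof -
  assume a: "0 \<le> \<alpha>" "\<alpha> \<le> 1"
  have "mL M X \<alpha> \<le> lowmed M (\<lambda>\<omega>. rgt (X \<omega>) \<alpha>)"
    unfolding mL_def using a by (intro lowmed_mono mlm mrm) (auto intro: lrle)
  also have "\<dots> \<le> mR M X \<alpha>"
    using mR_Med[OF a] unfolding Med_def by (intro lowmed_le[OF mrm[OF a]]) auto
  finally show ?thesis .
qed

lemma mL_leftcont:
  assumes a: "0 < \<alpha>" "\<alpha> \<le> 1" and h: "\<And>\<beta>. 0 < \<beta> \<Longrightarrow> \<beta> < \<alpha> \<Longrightarrow> mL M X \<beta> \<le> c"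
  shows "mL M X \<alpha> \<le> c"
  unfolding mL_def
proof (rule lowmed_leftcont[where Y="\<lambda>\<beta> \<omega>. lft (X \<omega>) \<beta>"])
  show "\<And>\<beta>. 0 < \<beta> \<Longrightarrow> \<beta> \<le> \<alpha> \<Longrightarrow> (\<lambda>\<omega>. lft (X \<omega>) \<beta>) \<in> borel_measurable M"
    using a by (intro mlm) auto
  show "\<And>\<beta> \<gamma> \<omega>. 0 < \<beta> \<Longrightarrow> \<beta> \<le> \<gamma> \<Longrightarrow> \<gamma> \<le> \<alpha> \<Longrightarrow> \<omega> \<in> space M \<Longrightarrow> lft (X \<omega>) \<beta> \<le> lft (X \<omega>) \<gamma>"
    using a by (auto intro: lmono)
  show "\<And>\<omega> c. \<omega> \<in> space M \<Longrightarrow> (\<And>\<beta>. 0 < \<beta> \<Longrightarrow> \<beta> < \<alpha> \<Longrightarrow> lft (X \<omega>) \<beta> \<le> c) \<Longrightarrow> lft (X \<omega>) \<alpha> \<le> c"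
    using a by (auto dest: XF intro: lft_leftcont)
next
  show "0 < \<alpha>" by (rule a)
  show "\<And>\<beta>. 0 < \<beta> \<Longrightarrow> \<beta> < \<alpha> \<Longrightarrow> lowmed M (\<lambda>\<omega>. lft (X \<omega>) \<beta>) \<le> c"
    using h unfolding mL_def by blast
qed

lemma mR_leftcont:
  assumes a: "0 < \<alpha>" "\<alpha> \<le> 1" and h: "\<And>\<beta>. 0 < \<beta> \<Longrightarrow> \<beta> < \<alpha> \<Longrightarrow> c \<le> mR M X \<beta>"
  shows "c \<le> mR M X \<alpha>"
proof -
  have "lowmed M (\<lambda>\<omega>. - rgt (X \<omega>) \<alpha>) \<le> - c"
  proof (rule lowmed_leftcont[where Y="\<lambda>\<beta> \<omega>. - rgt (X \<omega>) \<beta>"])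
    show "\<And>\<beta>. 0 < \<beta> \<Longrightarrow> \<beta> \<le> \<alpha> \<Longrightarrow> (\<lambda>\<omega>. - rgt (X \<omega>) \<beta>) \<in> borel_measurable M"
      using a by (intro mrm') auto
    show "\<And>\<beta> \<gamma> \<omega>. 0 < \<beta> \<Longrightarrow> \<beta> \<le> \<gamma> \<Longrightarrow> \<gamma> \<le> \<alpha> \<Longrightarrow> \<omega> \<in> space M \<Longrightarrow> - rgt (X \<omega>) \<beta> \<le> - rgt (X \<omega>) \<gamma>"
      using a by (auto intro: rmono)
    show "- rgt (X \<omega>) \<alpha> \<le> d" if "\<omega> \<in> space M" "\<And>\<beta>. 0 < \<beta> \<Longrightarrow> \<beta> < \<alpha> \<Longrightarrow> - rgt (X \<omega>) \<beta> \<le> d" for \<omega> d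
    proof -
      have "- d \<le> rgt (X \<omega>) \<alpha>"
      proof (rule rgt_leftcont[OF XF[OF that(1)] a])
        fix \<beta> :: real assume "0 < \<beta>" "\<beta> < \<alpha>"
        then show "- d \<le> rgt (X \<omega>) \<beta>" using that(2)[of \<beta>] by linarith
      qed
      then show ?thesis by simp
    qed
  next
    show "0 < \<alpha>" by (rule a)
    show "lowmed M (\<lambda>\<omega>. - rgt (X \<omega>) \<beta>) \<le> - c" if "0 < \<beta>" "\<beta> < \<alpha>" for \<beta>
      using h[OF that] unfolding mR_def by linarith
  qed
  then show ?thesis unfolding mR_def by simp
qed

definition "L0 = Inf (mL M X ` {0<..1})"
definition "R0 = Sup (mR M X ` {0<..1})"

lemma L0_Med: "L0 \<in> Med M (\<lambda>\<omega>. lft (X \<omega>) 0)"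
  unfolding L0_def mL_def
proof (rule lowmed_at0[where Y="\<lambda>\<beta> \<omega>. lft (X \<omega>) \<beta>", simplified])
  show "\<And>\<beta>. 0 \<le> \<beta> \<Longrightarrow> \<beta> \<le> 1 \<Longrightarrow> (\<lambda>\<omega>. lft (X \<omega>) \<beta>) \<in> borel_measurable M"
    by (rule mlm)
  show "\<And>\<beta> \<gamma> \<omega>. 0 \<le> \<beta> \<Longrightarrow> \<beta> \<le> \<gamma> \<Longrightarrow> \<gamma> \<le> 1 \<Longrightarrow> \<omega> \<in> space M \<Longrightarrow> lft (X \<omega>) \<beta> \<le> lft (X \<omega>) \<gamma>"
    by (rule lmono)
  show "c \<le> lft (X \<omega>) 0" if "\<omega> \<in> space M" "\<And>\<beta>. 0 < \<beta> \<Longrightarrow> \<beta> \<le> 1 \<Longrightarrow> c \<le> lft (X \<omega>) \<beta>" for \<omega> c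
    using that by (intro lft_at0 XF) auto
qed

lemma R0_Med: "R0 \<in> Med M (\<lambda>\<omega>. rgt (X \<omega>) 0)"
proof -
  have "Inf ((\<lambda>\<beta>. lowmed M (\<lambda>\<omega>. - rgt (X \<omega>) \<beta>)) ` {0<..1}) \<in> Med M (\<lambda>\<omega>. - rgt (X \<omega>) 0)"
  proof (rule lowmed_at0[where Y="\<lambda>\<beta> \<omega>. - rgt (X \<omega>) \<beta>", simplified])
    show "c \<le> - rgt (X \<omega>) 0" if "\<omega> \<in> space M" "\<And>\<beta>. 0 < \<beta> \<Longrightarrow> \<beta> \<le> 1 \<Longrightarrow> c \<le> - rgt (X \<omega>) \<beta>" for \<omega> c
    proof -
      have "rgt (X \<omega>) 0 \<le> - c"
      proof (rule rgt_at0[OF XF[OF that(1)]])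
        fix \<beta> :: real assume "0 < \<beta>" "\<beta> \<le> 1"
        then show "rgt (X \<omega>) \<beta> \<le> - c" using that(2)[of \<beta>] by linarith
      qed
      then show ?thesis by simp
    qed
  next
    show "\<And>\<beta>. 0 \<le> \<beta> \<Longrightarrow> \<beta> \<le> 1 \<Longrightarrow> (\<lambda>\<omega>. rgt (X \<omega>) \<beta>) \<in> borel_measurable M"
      by (rule mrm)
    show "\<And>\<beta> \<gamma> \<omega>. 0 \<le> \<beta> \<Longrightarrow> \<beta> \<le> \<gamma> \<Longrightarrow> \<gamma> \<le> 1 \<Longrightarrow> \<omega> \<in> space M \<Longrightarrow> rgt (X \<omega>) \<gamma> \<le> rgt (X \<omega>) \<beta>"
      by (rule rmono)
  qed
  moreover have "Inf ((\<lambda>\<beta>. lowmed M (\<lambda>\<omega>. - rgt (X \<omega>) \<beta>)) ` {0<..1}) = - R0"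
    unfolding R0_def mR_def Inf_real_def image_image by simp
  ultimately show ?thesis using Med_neg[of R0 M "\<lambda>\<omega>. rgt (X \<omega>) 0"] by simp
qed

lemma L0_le: "0 < \<alpha> \<Longrightarrow> \<alpha> \<le> 1 \<Longrightarrow> L0 \<le> mL M X \<alpha>"
  unfolding L0_def
  by (rule cInf_lower) (auto simp: bdd_below_def intro!: exI[of _ "mL M X 0"] mL_mono)

lemma R0_ge: "0 < \<alpha> \<Longrightarrow> \<alpha> \<le> 1 \<Longrightarrow> mR M X \<alpha> \<le> R0"
  unfolding R0_def
  by (rule cSup_upper) (auto simp: bdd_above_def intro!: exI[of _ "mR M X 0"] mR_mono)

lemma L0_le_R0: "L0 \<le> R0"
  using L0_le[of 1] R0_ge[of 1] mL_le_mR[of 1] by auto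

lemma medS_bdd: "bdd_above (medS M X x)"
  unfolding bdd_above_def medS_def by (rule exI[of _ 1]) auto

lemma medS_ne_iff: "medS M X x \<noteq> {} \<longleftrightarrow> 0 < medA M X x"
proof
  assume ne: "medS M X x \<noteq> {}"
  then obtain \<gamma> where g: "\<gamma> \<in> medS M X x" by auto
  have "\<gamma> \<le> Sup (medS M X x)"
    using g by (intro cSup_upper) (auto simp: bdd_above_def medS_def intro!: exI[of _ 1])
  then show "0 < medA M X x" using g ne unfolding medA_def medS_def by auto
qed (auto simp: medA_def)

lemma medA_vals: "0 \<le> medA M X x \<and> medA M X x \<le> 1"
proof (cases "medS M X x = {}")
  case False
  then have "Sup (medS M X x) \<le> 1"
    by (intro cSup_least) (auto simp: medS_def)
  then have "medA M X x \<le> 1" using False unfolding medA_def by simp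
  then show ?thesis using medS_ne_iff[of x] False by auto
qed (auto simp: medA_def)

lemma medA_level:
  assumes a: "0 < \<alpha>" "\<alpha> \<le> 1"
  shows "alpha_level (medA M X) \<alpha> = {mL M X \<alpha> .. mR M X \<alpha>}"
proof -
  have "\<alpha> \<le> medA M X x \<longleftrightarrow> mL M X \<alpha> \<le> x \<and> x \<le> mR M X \<alpha>" for x
  proof
    assume h: "mL M X \<alpha> \<le> x \<and> x \<le> mR M X \<alpha>"
    then have "\<alpha> \<in> medS M X x" using a unfolding medS_def by auto
    then show "\<alpha> \<le> medA M X x" unfolding medA_def
      using cSup_upper[OF _ medS_bdd] by auto
  next
    assume h: "\<alpha> \<le> medA M X x"
    then have ne: "medS M X x \<noteq> {}" using a unfolding medA_def by (auto split: if_splits)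
    have ex: "\<exists>\<gamma>\<in>medS M X x. \<beta> < \<gamma>" if "0 < \<beta>" "\<beta> < \<alpha>" for \<beta>
    proof -
      have "\<beta> < Sup (medS M X x)" using h ne that unfolding medA_def by auto
      then show ?thesis using less_cSup_iff[OF ne medS_bdd, of \<beta>] by blast
    qed
    have "mL M X \<alpha> \<le> x"
    proof (rule mL_leftcont[OF a])
      fix \<beta> assume b: "0 < \<beta>" "\<beta> < \<alpha>"
      then obtain \<gamma> where "\<gamma> \<in> medS M X x" "\<beta> < \<gamma>" using ex by blast
      then have "\<gamma> \<le> 1" "mL M X \<gamma> \<le> x" unfolding medS_def by auto
      then show "mL M X \<beta> \<le> x" using mL_mono[of \<beta> \<gamma>] b \<open>\<beta> < \<gamma>\<close> by linarith
    qed
    moreover have "x \<le> mR M X \<alpha>"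
    proof (rule mR_leftcont[OF a])
      fix \<beta> assume b: "0 < \<beta>" "\<beta> < \<alpha>"
      then obtain \<gamma> where "\<gamma> \<in> medS M X x" "\<beta> < \<gamma>" using ex by blast
      then have "\<gamma> \<le> 1" "x \<le> mR M X \<gamma>" unfolding medS_def by auto
      then show "x \<le> mR M X \<beta>" using mR_mono[of \<beta> \<gamma>] b \<open>\<beta> < \<gamma>\<close> by linarith
    qed
    ultimately show "mL M X \<alpha> \<le> x \<and> x \<le> mR M X \<alpha>" by auto
  qed
  then show ?thesis using a unfolding alpha_level_def by (simp add: set_eq_iff)
qed

lemma medA_level0: "alpha_level (medA M X) 0 = {L0 .. R0}"
proof -
  have pos: "{x. 0 < medA M X x} = {x. medS M X x \<noteq> {}}" using medS_ne_iff by auto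
  have sub: "{x. 0 < medA M X x} \<subseteq> {L0..R0}"
  proof
    fix x assume "x \<in> {x. 0 < medA M X x}"
    then obtain \<gamma> where "\<gamma> \<in> medS M X x" using pos by auto
    then show "x \<in> {L0..R0}" using L0_le[of \<gamma>] R0_ge[of \<gamma>] unfolding medS_def by force
  qed
  have sup: "{L0<..<R0} \<subseteq> {x. 0 < medA M X x}"
  proof
    fix x assume x: "x \<in> {L0<..<R0}"
    have ne1: "mL M X ` {0<..1} \<noteq> {}" "mR M X ` {0<..1} \<noteq> {}" by auto
    have bb1: "bdd_below (mL M X ` {0<..1})"
      by (auto simp: bdd_below_def intro!: exI[of _ "mL M X 0"] mL_mono)
    have bb2: "bdd_above (mR M X ` {0<..1})"
      by (auto simp: bdd_above_def intro!: exI[of _ "mR M X 0"] mR_mono)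
    have "\<exists>a\<in>{0<..1}. mL M X a < x"
      using x cInf_less_iff[OF ne1(1) bb1, of x] unfolding L0_def by auto
    then obtain a where a: "a \<in> {0<..1}" "mL M X a < x" by auto
    have "\<exists>a\<in>{0<..1}. x < mR M X a"
      using x less_cSup_iff[OF ne1(2) bb2, of x] unfolding R0_def by auto
    then obtain b where b: "b \<in> {0<..1}" "x < mR M X b" by auto
    have "min a b \<in> medS M X x"
      using a b mL_mono[of "min a b" a] mR_mono[of "min a b" b] unfolding medS_def by auto
    then show "x \<in> {x. 0 < medA M X x}" using pos by auto
  qed
  have "closure {x. 0 < medA M X x} = {L0..R0}"
  proof (cases "L0 < R0")
    case True
    have "closure {x. 0 < medA M X x} \<subseteq> {L0..R0}" using sub by (intro closure_minimal) auto
    moreover have "closure {L0<..<R0} \<subseteq> closure {x. 0 < medA M X x}"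
      by (intro closure_mono sup)
    ultimately show ?thesis using True by auto
  next
    case False
    then have eq: "L0 = R0" using L0_le_R0 by auto
    have "1 \<in> medS M X (mL M X 1)" using mL_le_mR[of 1] unfolding medS_def by auto
    then have "mL M X 1 \<in> {x. 0 < medA M X x}" using pos by auto
    then have "{x. 0 < medA M X x} = {L0}" using sub eq by auto
    then show ?thesis using eq by simp
  qed
  then show ?thesis unfolding alpha_level_def by simp
qed

lemma medA_Fc: "medA M X \<in> Fc"
  unfolding Fc_def
proof (intro CollectI conjI allI ballI)
  fix \<alpha> :: real assume a: "\<alpha> \<in> {0..1}"
  show "\<exists>a b. a \<le> b \<and> alpha_level (medA M X) \<alpha> = {a..b}"
  proof (cases "\<alpha> = 0")
    case True then show ?thesis using medA_level0 L0_le_R0 by auto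
  next
    case False then show ?thesis using medA_level[of \<alpha>] mL_le_mR[of \<alpha>] a by auto
  qed
qed (use medA_vals in auto)

lemma medA_Med_s: "medA M X \<in> Med_s M X"
  unfolding Med_s_def
proof (intro CollectI conjI ballI medA_Fc)
  fix u \<alpha> :: real assume u: "u \<in> {-1,1}" and a: "\<alpha> \<in> {0..1}"
  have lr: "lft (medA M X) \<alpha> \<in> Med M (\<lambda>\<omega>. lft (X \<omega>) \<alpha>) \<and> rgt (medA M X) \<alpha> \<in> Med M (\<lambda>\<omega>. rgt (X \<omega>) \<alpha>)"
  proof (cases "\<alpha> = 0")
    case True
    then show ?thesis using medA_level0 L0_le_R0 L0_Med R0_Med unfolding lft_def rgt_def by simp
  next
    case False
    then show ?thesis using medA_level[of \<alpha>] mL_le_mR[of \<alpha>] a mL_Med[of \<alpha>] mR_Med[of \<alpha>]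
      unfolding lft_def rgt_def by simp
  qed
  show "supp_fun (medA M X) u \<alpha> \<in> Med M (\<lambda>\<omega>. supp_fun (X \<omega>) u \<alpha>)"
  proof (cases "u = 1")
    case True then show ?thesis using lr by (simp add: supp_pos)
  next
    case False
    then have "u = -1" using u by auto
    then show ?thesis using lr Med_neg[of "lft (medA M X) \<alpha>" M "\<lambda>\<omega>. lft (X \<omega>) \<alpha>"] by (simp add: supp_neg)
  qed
qed

end
end

lemma Med_s_ne:
  assumes "prob_space M" "fuzzy_random_variable M X"
  shows "\<exists>B. B \<in> Med_s M X"
  using prob_space.medA_Med_s[OF assms] by blast


lemma D_FT_ge_iff:
  fixes M :: "'a measure" and X :: "'a \<Rightarrow> real \<Rightarrow> real"
  assumes "A \<in> Fc"
  shows "A \<in> Med_s M X \<longleftrightarrow> 1/2 \<le> D_FT M X A"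
proof -
  let ?f = "\<lambda>p. min (measure M {\<omega>\<in>space M. supp_fun (X \<omega>) (fst p) (snd p) \<le> supp_fun A (fst p) (snd p)})
          (measure M {\<omega>\<in>space M. supp_fun (X \<omega>) (fst p) (snd p) \<ge> supp_fun A (fst p) (snd p)})"
  have ne: "{-1,1::real} \<times> {0..1::real} \<noteq> {}" by auto
  have bdd: "bdd_below (?f ` ({-1,1::real} \<times> {0..1::real}))"
    unfolding bdd_below_def by (rule exI[of _ 0]) auto
  have "1/2 \<le> D_FT M X A \<longleftrightarrow> (\<forall>p\<in>{-1,1::real} \<times> {0..1::real}. 1/2 \<le> ?f p)"
    unfolding D_FT_def by (rule le_cINF_iff[OF ne bdd])
  also have "\<dots> \<longleftrightarrow> A \<in> Med_s M X"
    using assms unfolding Med_s_def Med_def by auto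
  finally show ?thesis by simp
qed

lemma med_unique:
  assumes P: "prob_space M" and m: "m \<in> Med M Y"
    and a1: "measure M {\<omega>\<in>space M. Y \<omega> \<le> a} > 1/2"
    and a2: "measure M {\<omega>\<in>space M. Y \<omega> \<ge> a} > 1/2"
  shows "m = a"
proof (rule ccontr)
  interpret prob_space M by (rule P)
  assume ne: "m \<noteq> a"
  have m1: "prob {\<omega>\<in>space M. Y \<omega> \<le> m} \<ge> 1/2" "prob {\<omega>\<in>space M. Y \<omega> \<ge> m} \<ge> 1/2"
    using m unfolding Med_def by auto
  have ev: "S \<in> events" if "prob S > 0" for S
    using that measure_notin_sets[of S M] by fastforce
  show False
  proof (cases "m < a")
    case True
    have "{\<omega>\<in>space M. Y \<omega> \<le> m} \<inter> {\<omega>\<in>space M. Y \<omega> \<ge> a} = {}" using True by auto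
    from disj_le[OF ev ev this] m1 a2 show False by auto
  next
    case False
    then have "a < m" using ne by auto
    then have "{\<omega>\<in>space M. Y \<omega> \<le> a} \<inter> {\<omega>\<in>space M. Y \<omega> \<ge> m} = {}" by auto
    from disj_le[OF ev ev this] m1 a1 show False by auto
  qed
qed

lemma D_FT_cong:
  assumes "\<And>u \<alpha>. u \<in> {-1,1} \<Longrightarrow> \<alpha> \<in> {0..1} \<Longrightarrow> supp_fun A u \<alpha> = supp_fun U u \<alpha>"
  shows "D_FT M X A = D_FT M X U"
  unfolding D_FT_def using assms by (intro arg_cong[where f=Inf] image_cong) auto

theorem theorem4p4:
  fixes M :: "'a measure" and X :: "'a \<Rightarrow> real \<Rightarrow> real"
  assumes "prob_space M"
    and "fuzzy_random_variable M X"
  shows "Med_s M X = Med_DFT M X"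
proof -
  obtain B where B: "B \<in> Med_s M X" using Med_s_ne[OF assms] by blast
  have BF: "B \<in> Fc" using B unfolding Med_s_def by auto
  have DB: "1/2 \<le> D_FT M X B" using D_FT_ge_iff[OF BF] B by auto
  show ?thesis
  proof (intro set_eqI iffI)
    fix A assume A: "A \<in> Med_DFT M X"
    then have AF: "A \<in> Fc" unfolding Med_DFT_def by auto
    have "D_FT M X B \<le> D_FT M X A" using A BF unfolding Med_DFT_def by auto
    then show "A \<in> Med_s M X" using D_FT_ge_iff[OF AF, of M X] DB by linarith
  next
    fix A assume A: "A \<in> Med_s M X"
    then have AF: "A \<in> Fc" unfolding Med_s_def by auto
    have DA: "1/2 \<le> D_FT M X A" using D_FT_ge_iff[OF AF] A by auto
    have "D_FT M X U \<le> D_FT M X A" if UF: "U \<in> Fc" for U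
    proof (cases "D_FT M X U \<le> 1/2")
      case True then show ?thesis using DA by auto
    next
      case False
      let ?f = "\<lambda>p. min (measure M {\<omega>\<in>space M. supp_fun (X \<omega>) (fst p) (snd p) \<le> supp_fun U (fst p) (snd p)})
          (measure M {\<omega>\<in>space M. supp_fun (X \<omega>) (fst p) (snd p) \<ge> supp_fun U (fst p) (snd p)})"
      have bdd: "bdd_below (?f ` ({-1,1::real} \<times> {0..1::real}))"
        unfolding bdd_below_def by (rule exI[of _ 0]) auto
      have "supp_fun A u \<alpha> = supp_fun U u \<alpha>" if u: "u \<in> {-1,1}" and a: "\<alpha> \<in> {0..1}" for u \<alpha>
      proof -
        have "D_FT M X U \<le> ?f (u, \<alpha>)"
          unfolding D_FT_def by (rule cINF_lower[OF bdd]) (use u a in auto)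
        then have "?f (u, \<alpha>) > 1/2" using False by auto
        moreover have "supp_fun A u \<alpha> \<in> Med M (\<lambda>\<omega>. supp_fun (X \<omega>) u \<alpha>)"
          using A u a unfolding Med_s_def by auto
        ultimately show ?thesis using med_unique[OF assms(1)] by auto
      qed
      then have "D_FT M X A = D_FT M X U" by (rule D_FT_cong)
      then show ?thesis by simp
    qed
    then show "A \<in> Med_DFT M X" using AF unfolding Med_DFT_def by auto
  qed
qed


end
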